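(* Let $r\geq 2$ be an integer and let $x_i$ ($1\le i\le r$) and $y_{i,j}$ ($2\le i\le j\le r$) be formal variables. Let $\mathcal{U}_r$ be the set of unordered increasing trees with vertex-set $\{1,\dots,r\}$. For $T\in\mathcal{U}_r$ define \[ \mathrm{wt}_y(T)=\prod_{v=2}^r\Big(x_{f_T(v)}\sum_{u\in \mathfrak{h}_T(v)} y_{v,u}\Big). \] Then \[ \sum_{T\in\mathcal{U}_r}\mathrm{wt}_y(T)= x_1\,y_{r,r}\prod_{i=2}^{r-1}\Bigg(\sum_{j=1}^{i} x_j\,y_{i,i}+\sum_{j=i+1}^{r} x_i\,y_{i,j}\Bigg). \]
   Context: A rooted tree has its edges oriented towards the root; the head of an edge is the father of its tail (the son). For a non-root vertex $v$ of a rooted tree $T$, $f_T(v)$ denotes its father. Descendants of a vertex are its sons and, recursively, descendants of its sons. An unordered increasing tree with vertex-set $\{1,\dots,r\}$ is a rooted tree on these labelled vertices (sons of a vertex are not ordered) such that the label of each son is larger than the label of its father (so the root is $1$). The hook $\mathfrak{h}_T(v)$ is the set consisting of $v$ and all its descendants in $T$. *)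

theory Defs
  imports Main
begin

text \<open>An unordered increasing tree on vertex set {1..r} (root 1) is represented by its
father map: every non-root vertex v in {2..r} has a father f v with 1 \<le> f v < v.
Outside {2..r} the map is fixed to 0 so that each tree has a unique representation.\<close>

definition inc_trees :: "nat \<Rightarrow> (nat \<Rightarrow> nat) set" where
  "inc_trees r = {f. (\<forall>v\<in>{2..r}. 1 \<le> f v \<and> f v < v) \<and> (\<forall>v. v \<notin> {2..r} \<longrightarrow> f v = 0)}"

definition father_rel :: "nat \<Rightarrow> (nat \<Rightarrow> nat) \<Rightarrow> (nat \<times> nat) set" where
  "father_rel r f = {(u, f u) | u. u \<in> {2..r}}"

definition hook :: "nat \<Rightarrow> (nat \<Rightarrow> nat) \<Rightarrow> nat \<Rightarrow> nat set" where
  "hook r f v = {u \<in> {1..r}. (u, v) \<in> (father_rel r f)\<^sup>*}"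

definition wt_y :: "nat \<Rightarrow> (nat \<Rightarrow> 'a::comm_ring_1) \<Rightarrow> (nat \<Rightarrow> nat \<Rightarrow> 'a) \<Rightarrow> (nat \<Rightarrow> nat) \<Rightarrow> 'a" where
  "wt_y r x y f = (\<Prod>v = 2..r. x (f v) * (\<Sum>u\<in>hook r f v. y v u))"

end

theory Submission
  imports Defs
begin



definition anc :: "nat \<Rightarrow> (nat \<Rightarrow> nat) \<Rightarrow> nat \<Rightarrow> nat \<Rightarrow> bool" where
  "anc r f u v \<longleftrightarrow> (u, v) \<in> (father_rel r f)\<^sup>*"

lemma father_rel_mem: "(a, b) \<in> father_rel r f \<longleftrightarrow> 2 \<le> a \<and> a \<le> r \<and> b = f a"
  by (auto simp: father_rel_def)

lemma anc_unfold: "anc r f u v \<longleftrightarrow> u = v \<or> (2 \<le> u \<and> u \<le> r \<and> anc r f (f u) v)"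
proof
  assume "anc r f u v"
  then have "(u, v) \<in> (father_rel r f)\<^sup>*" by (simp add: anc_def)
  then show "u = v \<or> (2 \<le> u \<and> u \<le> r \<and> anc r f (f u) v)"
    by (cases rule: converse_rtranclE) (auto simp: father_rel_mem anc_def)
next
  assume "u = v \<or> (2 \<le> u \<and> u \<le> r \<and> anc r f (f u) v)"
  then show "anc r f u v"
  proof
    assume "u = v" then show ?thesis by (simp add: anc_def)
  next
    assume h: "2 \<le> u \<and> u \<le> r \<and> anc r f (f u) v"
    then have "(u, f u) \<in> father_rel r f" by (simp add: father_rel_mem)
    with h show ?thesis unfolding anc_def by (meson converse_rtrancl_into_rtrancl)
  qed
qed

lemma hook_anc: "hook r f v = {u \<in> {1..r}. anc r f u v}"
  by (simp add: hook_def anc_def)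

lemma finite_inc_trees: "finite (inc_trees r)"
proof -
  have "inc_trees r \<subseteq> {f. \<forall>x. (x \<in> {2..r} \<longrightarrow> f x \<in> {..r}) \<and> (x \<notin> {2..r} \<longrightarrow> f x = 0)}"
    by (clarsimp simp: inc_trees_def) (metis atLeastAtMost_iff less_imp_le order_trans)
  moreover have "finite \<dots>" by (rule finite_set_of_finite_funs) auto
  ultimately show ?thesis by (rule finite_subset)
qed

lemma P1:
  fixes a b :: "'a::comm_ring_1"
  assumes "finite C"
  shows "(\<Sum>D\<in>Pow C. \<Prod>w\<in>C. if w \<in> D then b else a) = (a + b) ^ card C"
proof -
  have "(a+b) ^ card C = (\<Prod>w\<in>C. b + a)" by (simp add: add.commute)
  also have "\<dots> = (\<Sum>X\<in>Pow C. (\<Prod>x\<in>X. b) * (\<Prod>x\<in>C-X. a))"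
    by (rule prod_add[OF assms])
  also have "\<dots> = (\<Sum>D\<in>Pow C. \<Prod>w\<in>C. if w \<in> D then b else a)"
  proof (rule sum.cong[OF refl])
    fix D assume "D \<in> Pow C"
    then have "C \<inter> D = D" by auto
    then show "(\<Prod>x\<in>D. b) * (\<Prod>x\<in>C-D. a) = (\<Prod>w\<in>C. if w \<in> D then b else a)"
      using prod.If_cases[OF assms, of "\<lambda>w. w \<in> D" "\<lambda>_. b" "\<lambda>_. a"]
      by (simp add: Diff_eq Int_commute)
  qed
  finally show ?thesis by simp
qed

lemma P2:
  fixes a b :: "'a::comm_ring_1"
  assumes "finite C" "c \<in> C"
  shows "(\<Sum>D\<in>Pow C. (if c \<in> D then 1 else 0) * (\<Prod>w\<in>C. if w \<in> D then b else a)) = b * (a + b) ^ (card C - 1)"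
proof -
  let ?f2 = "\<lambda>w. if w = c then 0 else a"
  have "b * (a+b) ^ (card C - 1) = (b + ?f2 c) * (\<Prod>w\<in>C-{c}. b + ?f2 w)"
    using assms by (simp add: add.commute card_Diff_singleton)
  also have "\<dots> = (\<Prod>w\<in>C. b + ?f2 w)"
    using assms by (simp add: prod.remove)
  also have "\<dots> = (\<Sum>X\<in>Pow C. (\<Prod>x\<in>X. b) * (\<Prod>x\<in>C-X. ?f2 x))"
    by (rule prod_add[OF assms(1)])
  also have "\<dots> = (\<Sum>D\<in>Pow C. (if c \<in> D then 1 else 0) * (\<Prod>w\<in>C. if w \<in> D then b else a))"
  proof (rule sum.cong[OF refl])
    fix D assume D: "D \<in> Pow C"
    then have "C \<inter> D = D" by auto
    then have e: "(\<Prod>w\<in>C. if w \<in> D then b else a) = (\<Prod>x\<in>D. b) * (\<Prod>x\<in>C-D. a)"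
      using prod.If_cases[OF assms(1), of "\<lambda>w. w \<in> D" "\<lambda>_. b" "\<lambda>_. a"]
      by (simp add: Diff_eq Int_commute)
    show "(\<Prod>x\<in>D. b) * (\<Prod>x\<in>C-D. ?f2 x) = (if c \<in> D then 1 else 0) * (\<Prod>w\<in>C. if w \<in> D then b else a)"
    proof (cases "c \<in> D")
      case True
      then have "(\<Prod>x\<in>C-D. ?f2 x) = (\<Prod>x\<in>C-D. a)" by (intro prod.cong) auto
      then show ?thesis using True e by simp
    next
      case False
      then have "(\<Prod>x\<in>C-D. ?f2 x) = 0"
        using assms by (intro prod_zero) auto
      then show ?thesis using False by simp
    qed
  qed
  finally show ?thesis by simp
qed




definition bld :: "nat \<Rightarrow> (nat \<Rightarrow> nat) \<Rightarrow> nat set \<Rightarrow> nat \<Rightarrow> nat" where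
  "bld r g D = (\<lambda>v. if 3 \<le> v \<and> v \<le> Suc r then (if g (v-1) = 1 then (if v-1 \<in> D then 2 else 1) else Suc (g (v-1)))
                    else if v = 2 then 1 else 0)"

definition ctr :: "nat \<Rightarrow> (nat \<Rightarrow> nat) \<Rightarrow> nat \<Rightarrow> nat" where
  "ctr r f = (\<lambda>w. if 2 \<le> w \<and> w \<le> r then (if f (Suc w) \<le> 2 then 1 else f (Suc w) - 1) else 0)"

definition Df :: "nat \<Rightarrow> (nat \<Rightarrow> nat) \<Rightarrow> nat set" where
  "Df r f = {w. 2 \<le> w \<and> w \<le> r \<and> f (Suc w) = 2}"

definition Cg :: "nat \<Rightarrow> (nat \<Rightarrow> nat) \<Rightarrow> nat set" where
  "Cg r g = {w. 2 \<le> w \<and> w \<le> r \<and> g w = 1}"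

lemma inc_treesD: "g \<in> inc_trees r \<Longrightarrow> 2 \<le> v \<Longrightarrow> v \<le> r \<Longrightarrow> 1 \<le> g v \<and> g v < v"
  by (auto simp: inc_trees_def)
lemma inc_treesD0: "g \<in> inc_trees r \<Longrightarrow> \<not> (2 \<le> v \<and> v \<le> r) \<Longrightarrow> g v = 0"
  by (auto simp: inc_trees_def)

lemma bld_in: assumes g: "g \<in> inc_trees r" and r1: "1 \<le> r" shows "bld r g D \<in> inc_trees (Suc r)"
proof -
  have A: "\<forall>v\<in>{2..Suc r}. 1 \<le> bld r g D v \<and> bld r g D v < v"
  proof
    fix v assume v: "v \<in> {2..Suc r}"
    show "1 \<le> bld r g D v \<and> bld r g D v < v"
    proof (cases "v = 2")
      case True then show ?thesis by (simp add: bld_def)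
    next
      case False
      with v have "2 \<le> v - 1" "v - 1 \<le> r" by auto
      from inc_treesD[OF g this] False v show ?thesis by (auto simp: bld_def)
    qed
  qed
  have B: "\<forall>v. v \<notin> {2..Suc r} \<longrightarrow> bld r g D v = 0" using r1 by (auto simp: bld_def)
  from A B show ?thesis by (simp add: inc_trees_def)
qed

lemma ctr_in: assumes f: "f \<in> inc_trees (Suc r)" shows "ctr r f \<in> inc_trees r"
proof -
  have A: "\<forall>w\<in>{2..r}. 1 \<le> ctr r f w \<and> ctr r f w < w"
  proof
    fix w assume w: "w \<in> {2..r}"
    then have "2 \<le> Suc w" "Suc w \<le> Suc r" by auto
    from inc_treesD[OF f this] w show "1 \<le> ctr r f w \<and> ctr r f w < w" by (auto simp: ctr_def)
  qed
  have B: "\<forall>w. w \<notin> {2..r} \<longrightarrow> ctr r f w = 0" by (auto simp: ctr_def)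
  from A B show ?thesis by (simp add: inc_trees_def)
qed

lemma Df_sub: "f \<in> inc_trees (Suc r) \<Longrightarrow> Df r f \<subseteq> Cg r (ctr r f)"
  by (auto simp: Df_def Cg_def ctr_def)

lemma ctr_bld: assumes "g \<in> inc_trees r" shows "ctr r (bld r g D) = g"
proof
  fix w show "ctr r (bld r g D) w = g w"
  proof (cases "2 \<le> w \<and> w \<le> r")
    case True with inc_treesD[OF assms, of w] show ?thesis by (auto simp: ctr_def bld_def)
  next
    case False with inc_treesD0[OF assms, of w] show ?thesis by (auto simp: ctr_def)
  qed
qed

lemma Df_bld: assumes "g \<in> inc_trees r" "D \<subseteq> Cg r g" shows "Df r (bld r g D) = D"
  using assms by (auto simp: Df_def bld_def Cg_def)

lemma bld_ctr: assumes "f \<in> inc_trees (Suc r)" "1 \<le> r" shows "bld r (ctr r f) (Df r f) = f"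
proof
  fix v show "bld r (ctr r f) (Df r f) v = f v"
  proof (cases "3 \<le> v \<and> v \<le> Suc r")
    case True
    then have "2 \<le> v" "v \<le> Suc r" by auto
    from inc_treesD[OF assms(1) this] True show ?thesis
      by (auto simp: ctr_def bld_def Df_def)
  next
    case False
    show ?thesis
    proof (cases "v = 2")
      case True with inc_treesD[OF assms(1), of 2] assms(2) show ?thesis by (auto simp: bld_def)
    next
      case False2: False
      with False inc_treesD0[OF assms(1), of v] show ?thesis by (auto simp: bld_def)
    qed
  qed
qed

lemma bij_bld: "1 \<le> r \<Longrightarrow> bij_betw (\<lambda>(g, D). bld r g D) (SIGMA g:inc_trees r. Pow (Cg r g)) (inc_trees (Suc r))"
  apply (rule bij_betw_byWitness[where f' = "\<lambda>f. (ctr r f, Df r f)"])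
  subgoal by (auto simp: ctr_bld Df_bld)
  subgoal by (auto simp: bld_ctr)
  subgoal by (auto simp: bld_in)
  subgoal using Df_sub by (fastforce simp: ctr_in)
  done

function rc :: "(nat \<Rightarrow> nat) \<Rightarrow> nat \<Rightarrow> nat" where
  "rc g w = (if 2 \<le> g w \<and> g w < w then rc g (g w) else w)"
  by auto
termination by (relation "measure (\<lambda>(g, w). w)") auto
declare rc.simps[simp del]

lemma rc_C: "g \<in> inc_trees r \<Longrightarrow> 2 \<le> w \<Longrightarrow> w \<le> r \<Longrightarrow> rc g w \<in> Cg r g"
proof (induction w rule: less_induct)
  case (less w)
  have h: "1 \<le> g w" "g w < w" using inc_treesD[OF less.prems] by auto
  show ?case
  proof (cases "g w = 1")
    case True then show ?thesis using less.prems by (simp add: rc.simps Cg_def)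
  next
    case False
    then have "rc g w = rc g (g w)" using h by (simp add: rc.simps)
    then show ?thesis using less.IH[of "g w"] less.prems h False by simp
  qed
qed

lemma anc_out: "\<not> (2 \<le> u \<and> u \<le> r) \<Longrightarrow> anc r f u v \<longleftrightarrow> u = v"
  by (subst anc_unfold) auto

context
  fixes r g D
  assumes r: "2 \<le> r" and g: "g \<in> inc_trees r" and D: "D \<subseteq> Cg r g"
begin

lemma anc_shift: "2 \<le> w \<Longrightarrow> w \<le> r \<Longrightarrow>
   anc (Suc r) (bld r g D) u (Suc w) \<longleftrightarrow> (2 \<le> u \<and> anc r g (u-1) w)"
proof (induction u rule: less_induct)
  case (less u)
  show ?case
  proof (cases "3 \<le> u \<and> u \<le> Suc r")
    case True
    have gu: "1 \<le> g (u-1)" "g (u-1) < u - 1" using inc_treesD[OF g, of "u-1"] True by auto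
    have L: "anc (Suc r) (bld r g D) u (Suc w) \<longleftrightarrow> u = Suc w \<or> anc (Suc r) (bld r g D) (bld r g D u) (Suc w)"
      using True by (subst anc_unfold) auto
    have R: "anc r g (u-1) w \<longleftrightarrow> u - 1 = w \<or> anc r g (g (u-1)) w"
      using True by (subst anc_unfold) auto
    have bu: "bld r g D u < u" using bld_in[OF g, of D] r True by (auto simp: inc_trees_def)
    show ?thesis
    proof (cases "g (u-1) = 1")
      case True1: True
      have "bld r g D u \<le> 2" using True True1 by (auto simp: bld_def)
      then have "\<not> anc (Suc r) (bld r g D) (bld r g D u) (Suc w)"
        using less.IH[OF bu less.prems] anc_out[of 1 r g w] less.prems by (auto simp: le_Suc_eq)
      moreover have "\<not> anc r g 1 w" using anc_out[of 1 r g w] less.prems by auto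
      ultimately show ?thesis using L R True1 True by auto
    next
      case False
      then have "bld r g D u = Suc (g (u-1))" using True by (simp add: bld_def)
      then show ?thesis using L R less.IH[OF bu less.prems] True False gu by auto
    qed
  next
    case False
    have L: "anc (Suc r) (bld r g D) u (Suc w) \<longleftrightarrow> u = Suc w \<or> (u = 2 \<and> anc (Suc r) (bld r g D) 1 (Suc w))"
      using False r by (subst anc_unfold) (auto simp: bld_def)
    have "\<not> anc (Suc r) (bld r g D) 1 (Suc w)" using anc_out[of 1 "Suc r"] less.prems by auto
    moreover have "anc r g (u-1) w \<longleftrightarrow> u - 1 = w" using False by (intro anc_out) auto
    ultimately show ?thesis using L False less.prems by auto
  qed
qed

lemma hook_shift: assumes "2 \<le> w" "w \<le> r"
  shows "hook (Suc r) (bld r g D) (Suc w) = Suc ` hook r g w"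
proof -
  have "hook (Suc r) (bld r g D) (Suc w) = {u \<in> {1..Suc r}. 2 \<le> u \<and> anc r g (u-1) w}"
    using anc_shift[OF assms] by (simp add: hook_anc)
  also have "\<dots> = Suc ` {u \<in> {1..r}. anc r g u w}"
  proof (rule set_eqI)
    fix u show "u \<in> {u \<in> {1..Suc r}. 2 \<le> u \<and> anc r g (u-1) w} \<longleftrightarrow> u \<in> Suc ` {u \<in> {1..r}. anc r g u w}"
      by (cases u) (auto simp: image_iff)
  qed
  finally show ?thesis by (simp add: hook_anc)
qed

lemma anc_two: "anc (Suc r) (bld r g D) u 2 \<longleftrightarrow> u = 2 \<or> (3 \<le> u \<and> u \<le> Suc r \<and> rc g (u-1) \<in> D)"
proof (induction u rule: less_induct)
  case (less u)
  show ?case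
  proof (cases "3 \<le> u \<and> u \<le> Suc r")
    case True
    have gu: "1 \<le> g (u-1)" "g (u-1) < u - 1" using inc_treesD[OF g, of "u-1"] True by auto
    have L: "anc (Suc r) (bld r g D) u 2 \<longleftrightarrow> anc (Suc r) (bld r g D) (bld r g D u) 2"
      using True by (subst anc_unfold) auto
    have bu: "bld r g D u < u" using bld_in[OF g, of D] r True by (auto simp: inc_trees_def)
    show ?thesis
    proof (cases "g (u-1) = 1")
      case True1: True
      have rc1: "rc g (u-1) = u - 1" using True1 by (simp add: rc.simps)
      show ?thesis
      proof (cases "u - 1 \<in> D")
        case True2: True
        then have "bld r g D u = 2" using True True1 by (simp add: bld_def)
        then show ?thesis using L True rc1 True2 by (simp add: anc_def)
      next
        case False2: False
        then have "bld r g D u = 1" using True True1 by (simp add: bld_def)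
        moreover have "\<not> anc (Suc r) (bld r g D) 1 2" using anc_out[of 1 "Suc r"] by auto
        ultimately show ?thesis using L True rc1 False2 by simp
      qed
    next
      case False
      then have b: "bld r g D u = Suc (g (u-1))" using True by (simp add: bld_def)
      have rc2: "rc g (u-1) = rc g (g (u-1))" using False gu by (simp add: rc.simps)
      show ?thesis using L less.IH[OF bu] b rc2 True False gu by auto
    qed
  next
    case False
    have "anc (Suc r) (bld r g D) u 2 \<longleftrightarrow> u = 2 \<or> (u = 2 \<and> anc (Suc r) (bld r g D) 1 2)"
      using False r by (subst anc_unfold) (auto simp: bld_def)
    then show ?thesis using False by auto
  qed
qed

lemma hook_two: "hook (Suc r) (bld r g D) 2 = insert 2 {u \<in> {3..Suc r}. rc g (u-1) \<in> D}"
  using r by (auto simp: hook_anc anc_two)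

end



definition HH :: "nat \<Rightarrow> (nat \<Rightarrow> nat) \<Rightarrow> (nat \<Rightarrow> nat \<Rightarrow> 'a::comm_ring_1) \<Rightarrow> nat \<Rightarrow> 'a" where
  "HH r f y v = (\<Sum>u\<in>hook r f v. y v u)"
definition TT :: "nat \<Rightarrow> (nat \<Rightarrow> 'a::comm_ring_1) \<Rightarrow> (nat \<Rightarrow> nat \<Rightarrow> 'a) \<Rightarrow> (nat \<Rightarrow> nat) \<Rightarrow> 'a" where
  "TT r x y f = HH r f y 2 * (\<Prod>v = 3..r. x (f v) * HH r f y v)"
definition xs :: "(nat \<Rightarrow> 'a::comm_ring_1) \<Rightarrow> nat \<Rightarrow> 'a" where
  "xs x = (\<lambda>j. if j = 1 then x 1 + x 2 else x (Suc j))"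
definition ys :: "(nat \<Rightarrow> nat \<Rightarrow> 'a) \<Rightarrow> nat \<Rightarrow> nat \<Rightarrow> 'a" where
  "ys y = (\<lambda>i j. y (Suc i) (Suc j))"

context
  fixes r g and x :: "nat \<Rightarrow> 'a::comm_ring_1" and y :: "nat \<Rightarrow> nat \<Rightarrow> 'a"
  assumes r: "2 \<le> r" and g: "g \<in> inc_trees r"
begin

definition "MM = (\<Prod>w\<in>{2..r}. HH r g (ys y) w)"
definition "NN = (\<Prod>w\<in>{2..r} - Cg r g. xs x (g w))"
definition "EE D = (\<Prod>w\<in>Cg r g. if w \<in> D then x 2 else x 1)"

lemma Cg_sub: "Cg r g \<subseteq> {2..r}" by (auto simp: Cg_def)
lemma finite_Cg: "finite (Cg r g)" using Cg_sub finite_subset by blast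
lemma two_Cg: "2 \<in> Cg r g" using inc_treesD[OF g, of 2] r by (auto simp: Cg_def)
lemma card_Cg: "1 \<le> card (Cg r g)" using two_Cg finite_Cg
  by (metis One_nat_def Suc_leI card_gt_0_iff empty_iff)

lemma step1: assumes D: "D \<subseteq> Cg r g"
  shows "TT (Suc r) x y (bld r g D) = HH (Suc r) (bld r g D) y 2 * EE D * (MM * NN)"
proof -
  let ?f = "bld r g D"
  have "(\<Prod>v = 3..Suc r. x (?f v) * HH (Suc r) ?f y v) = (\<Prod>w = 2..r. x (?f (Suc w)) * HH (Suc r) ?f y (Suc w))"
  proof -
    have "{3..Suc r} = Suc ` {2..r}" by (simp add: image_Suc_atLeastAtMost)
    then show ?thesis
      by (simp only:) (rule trans[OF prod.reindex], simp_all add: o_def)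
  qed
  also have "\<dots> = (\<Prod>w = 2..r. x (?f (Suc w))) * MM"
  proof -
    have "HH (Suc r) ?f y (Suc w) = HH r g (ys y) w" if "w \<in> {2..r}" for w
      using that hook_shift[OF r g D, of w] by (simp add: HH_def sum.reindex ys_def)
    then have "(\<Prod>w = 2..r. HH (Suc r) ?f y (Suc w)) = MM"
      unfolding MM_def by (intro prod.cong) auto
    then show ?thesis by (simp add: prod.distrib del: prod.cl_ivl_Suc)
  qed
  also have "(\<Prod>w = 2..r. x (?f (Suc w))) = EE D * NN"
  proof -
    have "(\<Prod>w = 2..r. x (?f (Suc w))) = (\<Prod>w\<in>{2..r} - Cg r g. x (?f (Suc w))) * (\<Prod>w\<in>Cg r g. x (?f (Suc w)))"
      by (rule prod.subset_diff[OF Cg_sub]) simp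
    also have "(\<Prod>w\<in>{2..r} - Cg r g. x (?f (Suc w))) = NN"
      unfolding NN_def using inc_treesD[OF g]
      by (intro prod.cong) (auto simp: bld_def xs_def Cg_def)
    also have "(\<Prod>w\<in>Cg r g. x (?f (Suc w))) = EE D"
      unfolding EE_def by (intro prod.cong) (auto simp: bld_def Cg_def)
    finally show ?thesis by (simp add: mult.commute)
  qed
  finally show ?thesis by (simp add: TT_def mult_ac)
qed

lemma step2:
  "(\<Sum>D\<in>Pow (Cg r g). HH (Suc r) (bld r g D) y 2 * EE D)
     = (x 1 + x 2) ^ (card (Cg r g) - 1) *
       ((\<Sum>j = 1..2. x j * y 2 2) + (\<Sum>j = 2 + 1..Suc r. x 2 * y 2 j))"
proof -
  let ?U = "{3..Suc r}"
  let ?m = "card (Cg r g)"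
  let ?s = "x 1 + x 2"
  have H2: "HH (Suc r) (bld r g D) y 2 = y 2 2 + (\<Sum>u\<in>?U. (if rc g (u-1) \<in> D then 1 else 0) * y 2 u)"
    if "D \<subseteq> Cg r g" for D
  proof -
    have "HH (Suc r) (bld r g D) y 2 = y 2 2 + (\<Sum>u\<in>{u \<in> ?U. rc g (u-1) \<in> D}. y 2 u)"
      unfolding HH_def hook_two[OF r g that] by (subst sum.insert) auto
    also have "(\<Sum>u\<in>{u \<in> ?U. rc g (u-1) \<in> D}. y 2 u) = (\<Sum>u\<in>?U. (if rc g (u-1) \<in> D then 1 else 0) * y 2 u)"
    proof -
      have "(\<Sum>u\<in>?U. (if rc g (u-1) \<in> D then 1 else 0) * y 2 u) = (\<Sum>u\<in>?U. if rc g (u-1) \<in> D then y 2 u else 0)"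
        by (intro sum.cong) auto
      also have "\<dots> = (\<Sum>u\<in>{u \<in> ?U. rc g (u-1) \<in> D}. y 2 u)"
        by (rule sum.inter_filter[symmetric]) simp
      finally show ?thesis by (rule sym)
    qed
    finally show ?thesis .
  qed
  have "(\<Sum>D\<in>Pow (Cg r g). HH (Suc r) (bld r g D) y 2 * EE D)
      = (\<Sum>D\<in>Pow (Cg r g). y 2 2 * EE D + (\<Sum>u\<in>?U. y 2 u * ((if rc g (u-1) \<in> D then 1 else 0) * EE D)))"
    by (intro sum.cong refl) (auto simp: H2 algebra_simps sum_distrib_right sum_distrib_left del: sum.cl_ivl_Suc)
  also have "\<dots> = y 2 2 * (\<Sum>D\<in>Pow (Cg r g). EE D) + (\<Sum>u\<in>?U. y 2 u * (\<Sum>D\<in>Pow (Cg r g). (if rc g (u-1) \<in> D then 1 else 0) * EE D))"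
    by (simp add: sum.distrib sum_distrib_left del: sum.cl_ivl_Suc, rule sum.swap)
  also have "(\<Sum>D\<in>Pow (Cg r g). EE D) = ?s ^ ?m"
    unfolding EE_def by (rule P1[OF finite_Cg])
  also have "(\<Sum>u\<in>?U. y 2 u * (\<Sum>D\<in>Pow (Cg r g). (if rc g (u-1) \<in> D then 1 else 0) * EE D))
     = (\<Sum>u\<in>?U. y 2 u * (x 2 * ?s ^ (?m - 1)))"
  proof (intro sum.cong refl)
    fix u assume u: "u \<in> ?U"
    have "rc g (u-1) \<in> Cg r g" using u by (intro rc_C[OF g]) auto
    then show "y 2 u * (\<Sum>D\<in>Pow (Cg r g). (if rc g (u-1) \<in> D then 1 else 0) * EE D) = y 2 u * (x 2 * ?s ^ (?m - 1))"
      unfolding EE_def by (simp add: P2[OF finite_Cg])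
  qed
  also have "?s ^ ?m = ?s * ?s ^ (?m - 1)" using card_Cg
    by (metis One_nat_def Suc_diff_le diff_Suc_1 power_Suc)
  moreover have "(\<Sum>j = 1..2. x j * y 2 2) = x 1 * y 2 2 + x 2 * y 2 2"
    by (simp add: numeral_2_eq_2)
  ultimately show ?thesis
    by (simp add: numeral_3_eq_3 sum_distrib_left sum_distrib_right algebra_simps del: sum.cl_ivl_Suc)
qed

lemma step3: "TT r (xs x) (ys y) g = (x 1 + x 2) ^ (card (Cg r g) - 1) * (MM * NN)"
proof -
  have e: "{2..r} = insert 2 {3..r}" using r by auto
  have "TT r (xs x) (ys y) g = MM * (\<Prod>w = 3..r. xs x (g w))"
    unfolding TT_def MM_def e by (simp add: prod.distrib mult_ac)
  also have "(\<Prod>w = 3..r. xs x (g w)) = (\<Prod>w\<in>{3..r} - (Cg r g - {2}). xs x (g w)) * (\<Prod>w\<in>Cg r g - {2}. xs x (g w))"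
    by (rule prod.subset_diff) (use Cg_sub in auto)
  also have "{3..r} - (Cg r g - {2}) = {2..r} - Cg r g"
  proof (rule set_eqI)
    fix w show "w \<in> {3..r} - (Cg r g - {2}) \<longleftrightarrow> w \<in> {2..r} - Cg r g"
      using two_Cg Cg_sub by (cases "w = 2") auto
  qed
  also have "(\<Prod>w\<in>Cg r g - {2}. xs x (g w)) = (x 1 + x 2) ^ (card (Cg r g) - 1)"
  proof -
    have "(\<Prod>w\<in>Cg r g - {2}. xs x (g w)) = (\<Prod>w\<in>Cg r g - {2}. x 1 + x 2)"
      by (intro prod.cong) (auto simp: Cg_def xs_def)
    then show ?thesis using two_Cg finite_Cg by (simp add: card_Diff_singleton)
  qed
  finally show ?thesis by (simp add: NN_def mult_ac)
qed

lemma step_g: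
  "(\<Sum>D\<in>Pow (Cg r g). TT (Suc r) x y (bld r g D))
    = ((\<Sum>j = 1..2. x j * y 2 2) + (\<Sum>j = 2 + 1..Suc r. x 2 * y 2 j)) * TT r (xs x) (ys y) g"
proof -
  have "(\<Sum>D\<in>Pow (Cg r g). TT (Suc r) x y (bld r g D)) = (\<Sum>D\<in>Pow (Cg r g). HH (Suc r) (bld r g D) y 2 * EE D) * (MM * NN)"
    by (simp add: step1 sum_distrib_right)
  then show ?thesis unfolding step2 step3 by (simp only: mult_ac)
qed

end

lemma PHI_step:
  fixes x :: "nat \<Rightarrow> 'a::comm_ring_1"
  assumes r: "2 \<le> r"
  shows "(\<Sum>f\<in>inc_trees (Suc r). TT (Suc r) x y f)
    = ((\<Sum>j = 1..2. x j * y 2 2) + (\<Sum>j = 2 + 1..Suc r. x 2 * y 2 j)) * (\<Sum>g\<in>inc_trees r. TT r (xs x) (ys y) g)"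
proof -
  have "(\<Sum>f\<in>inc_trees (Suc r). TT (Suc r) x y f) = (\<Sum>(g, D)\<in>(SIGMA g:inc_trees r. Pow (Cg r g)). TT (Suc r) x y (bld r g D))"
    using sum.reindex_bij_betw[OF bij_bld, of r "TT (Suc r) x y"] r by (simp add: case_prod_beta')
  also have "\<dots> = (\<Sum>g\<in>inc_trees r. \<Sum>D\<in>Pow (Cg r g). TT (Suc r) x y (bld r g D))"
    by (rule sum.Sigma[symmetric]) (auto simp: finite_inc_trees Cg_def)
  also have "\<dots> = (\<Sum>g\<in>inc_trees r. ((\<Sum>j = 1..2. x j * y 2 2) + (\<Sum>j = 2 + 1..Suc r. x 2 * y 2 j)) * TT r (xs x) (ys y) g)"
    by (intro sum.cong refl step_g[OF r])
  finally show ?thesis by (simp add: sum_distrib_left)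
qed




definition QQ :: "nat \<Rightarrow> (nat \<Rightarrow> 'a::comm_ring_1) \<Rightarrow> (nat \<Rightarrow> nat \<Rightarrow> 'a) \<Rightarrow> nat \<Rightarrow> 'a" where
  "QQ r x y i = (\<Sum>j = 1..i. x j * y i i) + (\<Sum>j = i + 1..r. x i * y i j)"

lemma sum_xs: "1 \<le> i \<Longrightarrow> (\<Sum>j = 1..i. xs x j) = (\<Sum>j = 1..Suc i. x j)"
proof (induction i rule: dec_induct)
  case base then show ?case by (simp add: xs_def numeral_2_eq_2)
next
  case (step n) then show ?case by (simp add: xs_def)
qed

lemma QQ_shift: assumes "2 \<le> i" shows "QQ r (xs x) (ys y) i = QQ (Suc r) x y (Suc i)"
proof -
  have "(\<Sum>j = 1..i. xs x j * ys y i i) = (\<Sum>j = 1..i. xs x j) * y (Suc i) (Suc i)"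
    by (simp add: ys_def sum_distrib_right)
  also have "\<dots> = (\<Sum>j = 1..Suc i. x j * y (Suc i) (Suc i))"
  proof -
    have "(\<Sum>j=1..i. xs x j) = (\<Sum>j=1..Suc i. x j)" using assms by (intro sum_xs) auto
    then show ?thesis by (simp only: sum_distrib_right)
  qed
  finally have A: "(\<Sum>j = 1..i. xs x j * ys y i i) = (\<Sum>j = 1..Suc i. x j * y (Suc i) (Suc i))" .
  have "(\<Sum>j = i + 1..r. xs x i * ys y i j) = (\<Sum>j = i + 1..r. x (Suc i) * y (Suc i) (Suc j))"
    using assms by (simp add: xs_def ys_def)
  also have "\<dots> = (\<Sum>j = Suc i + 1..Suc r. x (Suc i) * y (Suc i) j)"
    by (simp only: Suc_eq_plus1[symmetric] sum.shift_bounds_cl_Suc_ivl)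
  finally show ?thesis using A by (simp add: QQ_def del: sum.cl_ivl_Suc)
qed

lemma inc_trees_2: "inc_trees 2 = {\<lambda>v. if v = 2 then 1 else 0}"
proof (rule set_eqI)
  fix f
  show "f \<in> inc_trees 2 \<longleftrightarrow> f \<in> {\<lambda>v. if v = 2 then 1 else 0}"
  proof
    assume f: "f \<in> inc_trees 2"
    have "f v = (if v = 2 then 1 else 0)" for v
      using inc_treesD[OF f, of 2] inc_treesD0[OF f, of v] by auto
    then show "f \<in> {\<lambda>v. if v = 2 then 1 else 0}" by auto
  qed (auto simp: inc_trees_def)
qed

lemma main:
  fixes x :: "nat \<Rightarrow> 'a::comm_ring_1"
  assumes "2 \<le> r"
  shows "(\<Sum>f\<in>inc_trees r. TT r x y f) = y r r * (\<Prod>i = 2..r - 1. QQ r x y i)"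
  using assms
proof (induction r arbitrary: x y rule: dec_induct)
  case base
  let ?f = "\<lambda>v::nat. if v = 2 then 1 else (0::nat)"
  have "hook 2 ?f 2 = {2}"
  proof -
    have n1: "\<not> anc 2 ?f 1 2" using anc_out[of 1 2 ?f 2] by simp
    have n2: "anc 2 ?f 2 2" by (simp add: anc_def)
    have "anc 2 ?f u 2 \<longleftrightarrow> u = 2" if "u \<in> {1..2}" for u
    proof -
      from that have "u = 1 \<or> u = 2" by auto
      then show ?thesis using n1 n2 by auto
    qed
    then show ?thesis by (auto simp: hook_anc)
  qed
  then show ?case by (simp add: inc_trees_2 TT_def HH_def)
next
  case (step r)
  have "(\<Sum>f\<in>inc_trees (Suc r). TT (Suc r) x y f) = QQ (Suc r) x y 2 * (ys y r r * (\<Prod>i = 2..r - 1. QQ r (xs x) (ys y) i))"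
    using PHI_step[OF step.hyps(1), of x y] step.IH by (simp add: QQ_def)
  also have "(\<Prod>i = 2..r - 1. QQ r (xs x) (ys y) i) = (\<Prod>i = 2..r - 1. QQ (Suc r) x y (Suc i))"
    by (intro prod.cong refl QQ_shift) auto
  also have "\<dots> = (\<Prod>i = 3..r. QQ (Suc r) x y i)"
  proof -
    have "{3..r} = Suc ` {2..r-1}" using step.hyps(1) by (auto simp: image_Suc_atLeastAtMost)
    then show ?thesis by (simp only:) (rule sym, rule trans[OF prod.reindex], simp_all add: o_def)
  qed
  also have "QQ (Suc r) x y 2 * (ys y r r * (\<Prod>i = 3..r. QQ (Suc r) x y i)) = y (Suc r) (Suc r) * (\<Prod>i = 2..Suc r - 1. QQ (Suc r) x y i)"
  proof -
    have "{2..Suc r - 1} = insert 2 {3..r}" using step.hyps(1) by auto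
    then show ?thesis by (simp add: ys_def mult_ac del: prod.cl_ivl_Suc)
  qed
  finally show ?case .
qed


theorem theorem1p1:
  fixes r :: nat and x :: "nat \<Rightarrow> 'a::comm_ring_1" and y :: "nat \<Rightarrow> nat \<Rightarrow> 'a"
  assumes "r \<ge> 2"
  shows "(\<Sum>T\<in>inc_trees r. wt_y r x y T) =
    x 1 * y r r * (\<Prod>i = 2..r - 1. (\<Sum>j = 1..i. x j * y i i) + (\<Sum>j = i + 1..r. x i * y i j))"
proof -
  have e: "{2..r} = insert 2 {3..r}" using assms by auto
  have "wt_y r x y T = x 1 * TT r x y T" if T: "T \<in> inc_trees r" for T
  proof -
    have "T 2 = 1" using inc_treesD[OF T, of 2] assms by auto
    then show ?thesis unfolding wt_y_def TT_def HH_def e by (simp add: mult_ac)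
  qed
  then have "(\<Sum>T\<in>inc_trees r. wt_y r x y T) = x 1 * (\<Sum>T\<in>inc_trees r. TT r x y T)"
    by (simp add: sum_distrib_left)
  also have "\<dots> = x 1 * (y r r * (\<Prod>i = 2..r - 1. QQ r x y i))"
    by (simp only: main[OF assms, of x y])
  finally show ?thesis by (simp add: QQ_def mult_ac)
qed

end
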